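(* Fix $v\in(0,\tfrac12)$ and consider $\alpha\in[0,1]$. For $y\in[0,1]$ let $$x^A(y)=\begin{cases}-\alpha+\sqrt{\alpha^2+y^2-2v}, & y\ge\sqrt{2v},\\ 0,& y<\sqrt{2v},\end{cases}\qquad W(y)=\int_{x^A(y)}^{y}\Big(\alpha x+v-\int_x^y\tilde x\,d\tilde x\Big)\,dx .$$ Then there exists a threshold $\alpha^P$ such that the social planner's problem $\max_{y\in[0,1]}W(y)$ is solved by $y^{P*}=\tfrac12\big(\alpha+\sqrt{\alpha^2+4v}\big)$ when $\alpha<\alpha^P$ (content moderation) and by $y^{P*}=1$ (no content moderation) when $\alpha>\alpha^P$. Moreover, with $\alpha^A,\alpha^S,y^{A*},y^{S*}$ as defined in the context, $$\alpha^P<\alpha^S<\alpha^A,$$ and whenever $\alpha<\alpha^P$, $$y^{S*}<y^{P*}<y^{A*}.$$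
   Context: Model: users are indexed by an extremeness index $x$ uniformly distributed (density 1) on $[0,1]$. A platform chooses a moderation level $y\in[0,1]$ and (with perfect technology) removes all content of users with $x>y$. A participating user $x\le y$ has utility $U(x)=\alpha x+v-\int_{\tilde x\in\hat{\mathcal X},\,x<\tilde x\le y}\tilde x\,d\tilde x$, where $\hat{\mathcal X}$ is the set of participating users; $\alpha\ge 0$ is the posting-utility parameter and $v$ the reading utility. Under this model, for a given $y$ the participating users (with no fee) form the interval $[x^A(y),y]$ with $x^A$ as in the claim, and the social welfare is $W(y)$. Advertising platform: maximizes $\zeta\,(y-x^A(y))$ over $y$ (with $\zeta>0$); define $\alpha^A:=\sqrt{2v}$ and $y^{A*}:=\sqrt{2v}$ (its optimal moderation level when $\alpha<\alpha^A$; for $\alpha\ge\alpha^A$ it chooses $y=1$). Subscription platform: chooses $y\in[0,1]$ and fee $p\ge0$ to maximize $p\,(y-x^S(y,p))$ where $x^S(y,p)=-\alpha+\sqrt{\alpha^2+y^2-2(v-p)}$ if $y^2\ge 2(v-p)$ and $x^S(y,p)=0$ otherwise. Define $\Pi(\alpha)=\max_{p\ge 0}p\big(1+\alpha-\sqrt{\alpha^2+1-2(v-p)}\big)$ and $\alpha^S:=\inf\{\alpha\ge0:\Pi(\alpha)\ge (2v/3)^{3/2}\}$; this is the threshold below which the subscription platform moderates content, choosing $y^{S*}:=\sqrt{2v/3}$ (and above which it chooses $y=1$). *)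

theory Defs
  imports "HOL-Analysis.Analysis"
begin

definition xA :: "real \<Rightarrow> real \<Rightarrow> real \<Rightarrow> real" where
  "xA v \<alpha> y = (if y \<ge> sqrt (2* v) then sqrt (\<alpha>\<^sup>2 + y\<^sup>2 - 2* v) - \<alpha> else 0)"

definition W :: "real \<Rightarrow> real \<Rightarrow> real \<Rightarrow> real" where
  "W v \<alpha> y = integral {xA v \<alpha> y..y} (\<lambda>x. \<alpha>*x + v - integral {x..y} (\<lambda>t. t))"

definition planner_solves :: "real \<Rightarrow> real \<Rightarrow> real \<Rightarrow> bool" where
  "planner_solves v \<alpha> y \<longleftrightarrow> y \<in> {0..1} \<and> (\<forall>z\<in>{0..1}. W v \<alpha> z \<le> W v \<alpha> y)"

definition yP :: "real \<Rightarrow> real \<Rightarrow> real" where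
  "yP v \<alpha> = (\<alpha> + sqrt (\<alpha>\<^sup>2 + 4* v)) / 2"

definition alphaA :: "real \<Rightarrow> real" where "alphaA v = sqrt (2* v)"
definition yA :: "real \<Rightarrow> real" where "yA v = sqrt (2* v)"
definition yS :: "real \<Rightarrow> real" where "yS v = sqrt (2* v/3)"

definition PiS :: "real \<Rightarrow> real \<Rightarrow> real" where
  "PiS v \<alpha> = (SUP p\<in>{0..}. p * (1 + \<alpha> - sqrt (\<alpha>\<^sup>2 + 1 - 2* (v - p))))"

definition alphaS :: "real \<Rightarrow> real" where
  "alphaS v = Inf {\<alpha>. \<alpha> \<ge> 0 \<and> PiS v \<alpha> \<ge> (2* v/3) powr (3/2)}"

end

theory Submission
  imports Defs
begin


lemma integral_U:
  fixes a y \<alpha> v :: real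
  assumes "a \<le> y"
  shows "integral {a..y} (\<lambda>x. \<alpha>*x + v - integral {x..y} (\<lambda>t. t)) =
     (\<alpha>*y^2/2 + (v - y^2/2)*y + y^3/6) - (\<alpha>*a^2/2 + (v-y^2/2)*a + a^3/6)"
proof -
  have "integral {a..y} (\<lambda>x. \<alpha>*x + v - integral {x..y} (\<lambda>t. t)) =
        integral {a..y} (\<lambda>x. \<alpha>*x + v - (y^2 - x^2)/2)"
    by (rule integral_cong) auto
  also have "\<dots> = (\<alpha>*y^2/2 + (v - y^2/2)*y + y^3/6) - (\<alpha>*a^2/2 + (v-y^2/2)*a + a^3/6)"
  proof (rule integral_unique, rule fundamental_theorem_of_calculus[OF assms])
    fix x assume "x \<in> {a..y}"
    show "((\<lambda>x. \<alpha>*x^2/2 + (v - y^2/2)*x + x^3/6) has_vector_derivative (\<alpha>*x + v - (y^2 - x^2)/2)) (at x within {a..y})"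
      unfolding has_real_derivative_iff_has_vector_derivative[symmetric]
      by (rule derivative_eq_intros refl | simp add: power2_eq_square field_simps)+
  qed
  finally show ?thesis .
qed

lemma xA_le: "0 \<le> \<alpha> \<Longrightarrow> 0 \<le> y \<Longrightarrow> 0 < v \<Longrightarrow> xA v \<alpha> y \<le> y"
proof -
  assume h: "0 \<le> \<alpha>" "0 \<le> y" "0 < v"
  have "sqrt (\<alpha>\<^sup>2 + y\<^sup>2 - 2* v) \<le> sqrt ((y+\<alpha>)^2)"
    using h by (intro real_sqrt_le_mono) (simp add: power2_eq_square algebra_simps)
  also have "\<dots> = y + \<alpha>" using h by simp
  finally show ?thesis using h unfolding xA_def by auto
qed

definition Fw :: "real \<Rightarrow> real \<Rightarrow> real \<Rightarrow> real \<Rightarrow> real" where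
  "Fw v \<alpha> y x = \<alpha>*x^2/2 + (v-y^2/2)*x + x^3/6"

lemma W_eq: "0 \<le> \<alpha> \<Longrightarrow> 0 \<le> y \<Longrightarrow> 0 < v \<Longrightarrow> W v \<alpha> y = Fw v \<alpha> y y - Fw v \<alpha> y (xA v \<alpha> y)"
  unfolding W_def Fw_def by (rule integral_U[OF xA_le])


definition Fm :: "real \<Rightarrow> real \<Rightarrow> real \<Rightarrow> real" where
  "Fm v \<alpha> y = \<alpha> * y^2/2 + v * y - y^3/3"

definition Gf :: "real \<Rightarrow> real \<Rightarrow> real \<Rightarrow> real" where
  "Gf v \<alpha> y = Fm v \<alpha> y + \<alpha> * (sqrt (\<alpha>^2+y^2-2 * v)-\<alpha>)^2/2 + (sqrt (\<alpha>^2+y^2-2 * v)-\<alpha>)^3/3"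

lemma deriv_aux:
  assumes "(A has_real_derivative A') (at z)"
  shows "((\<lambda>z. \<alpha> * z^2/2 + v * z - z^3/3 + \<alpha> * (A z)^2/2 + (A z)^3/3) has_real_derivative
           (\<alpha> * z + v - z^2 + \<alpha> * A z * A' + (A z)^2 * A')) (at z)"
  using assms by (auto intro!: derivative_eq_intros simp: power2_eq_square field_simps)

lemma Gf_deriv:
  assumes "0 < \<alpha>^2+z^2-2 * v"
  shows "((Gf v \<alpha>) has_real_derivative (v - z^2 + z * sqrt (\<alpha>^2+z^2-2 * v))) (at z)"
proof -
  define S where "S = sqrt (\<alpha>^2+z^2-2 * v)"
  have Spos: "S > 0" unfolding S_def using assms by simp
  have dS: "((\<lambda>z. sqrt (\<alpha>^2+z^2-2 * v) - \<alpha>) has_real_derivative (z / S)) (at z)"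
    unfolding S_def using assms
    by (auto intro!: derivative_eq_intros simp: field_simps)
  have d: "((Gf v \<alpha>) has_real_derivative
     (\<alpha> * z + v - z^2 + \<alpha> * (S-\<alpha>) * (z/S) + (S-\<alpha>)^2 * (z/S))) (at z)"
    using deriv_aux[OF dS, of \<alpha> v] unfolding Gf_def[abs_def] Fm_def S_def by simp
  have eq: "\<alpha> * z + v - z^2 + \<alpha> * (S-\<alpha>) * (z/S) + (S-\<alpha>)^2 * (z/S) = v - z^2 + z * S"
    using Spos by (simp add: field_simps power2_eq_square)
  from d[unfolded eq] show ?thesis unfolding S_def .
qed

lemma Gsign_nonneg:
  assumes "0 < z" "2 * v \<le> z^2" "0 < v" "v \<le> \<alpha> * z"
  shows "0 \<le> v - z^2 + z * sqrt (\<alpha>^2+z^2-2 * v)"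
proof -
  have "(z^2 - v)^2 \<le> z^2 * (\<alpha>^2+z^2-2 * v)"
  proof -
    have "v^2 \<le> (\<alpha> * z)^2" using assms by (intro power_mono) auto
    then show ?thesis by (simp add: power2_eq_square algebra_simps)
  qed
  then have "sqrt ((z^2 - v)^2) \<le> sqrt (z^2 * (\<alpha>^2+z^2-2 * v))" by (rule real_sqrt_le_mono)
  moreover have "sqrt ((z^2 - v)^2) = z^2 - v" using assms by simp
  moreover have "sqrt (z^2 * (\<alpha>^2+z^2-2 * v)) = z * sqrt (\<alpha>^2+z^2-2 * v)"
    using assms by (simp add: real_sqrt_mult)
  ultimately show ?thesis by simp
qed

lemma Gsign_nonpos:
  assumes "0 < z" "2 * v \<le> z^2" "0 < v" "\<alpha> * z \<le> v" "0 \<le> \<alpha>"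
  shows "v - z^2 + z * sqrt (\<alpha>^2+z^2-2 * v) \<le> 0"
proof -
  have rad: "0 \<le> \<alpha>^2+z^2-2 * v" using assms zero_le_power2[of \<alpha>] by linarith
  have "z^2 * (\<alpha>^2+z^2-2 * v) \<le> (z^2 - v)^2"
  proof -
    have "(\<alpha> * z)^2 \<le> v^2" using assms by (intro power_mono) auto
    then show ?thesis by (simp add: power2_eq_square algebra_simps)
  qed
  then have "sqrt (z^2 * (\<alpha>^2+z^2-2 * v)) \<le> sqrt ((z^2 - v)^2)" by (rule real_sqrt_le_mono)
  moreover have "sqrt ((z^2 - v)^2) = z^2 - v" using assms by simp
  moreover have "sqrt (z^2 * (\<alpha>^2+z^2-2 * v)) = z * sqrt (\<alpha>^2+z^2-2 * v)"
    using assms by (simp add: real_sqrt_mult)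
  ultimately show ?thesis by simp
qed

lemma Gf_cont: "continuous_on A (Gf v \<alpha>)"
  unfolding Gf_def[abs_def] Fm_def by (intro continuous_intros) auto

lemma sqrt2v_pos: "0 < v \<Longrightarrow> 0 < sqrt (2 * v)" by simp

lemma Gf_inc:
  assumes "sqrt (2 * v) \<le> z1" "z1 \<le> z2" "v \<le> \<alpha> * z1" "0 \<le> \<alpha>" "0 < v"
  shows "Gf v \<alpha> z1 \<le> Gf v \<alpha> z2"
proof (rule DERIV_nonneg_imp_increasing_open[OF assms(2) _ Gf_cont])
  fix x assume x: "z1 < x" "x < z2"
  have x0: "0 < x" using x assms sqrt2v_pos[of v] by linarith
  have "(sqrt (2 * v))^2 < x^2" using x assms sqrt2v_pos[of v] by (intro power_strict_mono) auto
  then have xx: "2 * v < x^2" using assms by simp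
  have rad: "0 < \<alpha>^2+x^2-2 * v" using xx zero_le_power2[of \<alpha>] by linarith
  have "\<alpha> * z1 \<le> \<alpha> * x" using x assms by (intro mult_left_mono) auto
  then have "0 \<le> v - x^2 + x * sqrt (\<alpha>^2+x^2-2 * v)"
    using Gsign_nonneg[of x v \<alpha>] x0 xx assms by auto
  then show "\<exists>y. (Gf v \<alpha> has_real_derivative y) (at x) \<and> 0 \<le> y"
    using Gf_deriv[OF rad] by blast
qed

lemma Gf_dec:
  assumes "sqrt (2 * v) \<le> z1" "z1 \<le> z2" "\<alpha> * z2 \<le> v" "0 \<le> \<alpha>" "0 < v"
  shows "Gf v \<alpha> z2 \<le> Gf v \<alpha> z1"
proof (rule DERIV_nonpos_imp_decreasing_open[OF assms(2) _ Gf_cont])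
  fix x assume x: "z1 < x" "x < z2"
  have x0: "0 < x" using x assms sqrt2v_pos[of v] by linarith
  have "(sqrt (2 * v))^2 < x^2" using x assms sqrt2v_pos[of v] by (intro power_strict_mono) auto
  then have xx: "2 * v < x^2" using assms by simp
  have rad: "0 < \<alpha>^2+x^2-2 * v" using xx zero_le_power2[of \<alpha>] by linarith
  have "\<alpha> * x \<le> \<alpha> * z2" using x assms by (intro mult_left_mono) auto
  then have "v - x^2 + x * sqrt (\<alpha>^2+x^2-2 * v) \<le> 0"
    using Gsign_nonpos[of x v \<alpha>] x0 xx assms by auto
  then show "\<exists>y. (Gf v \<alpha> has_real_derivative y) (at x) \<and> y \<le> 0"
    using Gf_deriv[OF rad] by blast
qed

lemma Gf_at: "0 \<le> \<alpha> \<Longrightarrow> 0 < v \<Longrightarrow> Gf v \<alpha> (sqrt (2 * v)) = Fm v \<alpha> (sqrt (2 * v))"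
  unfolding Gf_def by simp

lemma yP_facts:
  assumes "0 \<le> \<alpha>" "0 < v"
  shows "0 < yP v \<alpha>" "(yP v \<alpha>)^2 = \<alpha> * yP v \<alpha> + v" "\<alpha> \<le> yP v \<alpha>" "\<alpha> < yP v \<alpha>"
proof -
  define S where "S = sqrt (\<alpha>\<^sup>2 + 4 * v)"
  have S2: "S^2 = \<alpha>^2 + 4 * v" unfolding S_def using assms by (simp add: add_nonneg_nonneg)
  have "sqrt (\<alpha>^2) < sqrt (\<alpha>^2 + 4 * v)" using assms by (intro real_sqrt_less_mono) simp
  then have Sa: "\<alpha> < S" unfolding S_def using assms by simp
  show "0 < yP v \<alpha>" unfolding yP_def S_def[symmetric] using Sa assms by simp
  show "(yP v \<alpha>)^2 = \<alpha> * yP v \<alpha> + v" unfolding yP_def S_def[symmetric]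
    using S2 by (simp add: power2_eq_square field_simps)
  show "\<alpha> \<le> yP v \<alpha>" unfolding yP_def S_def[symmetric] using Sa by simp
  show "\<alpha> < yP v \<alpha>" unfolding yP_def S_def[symmetric] using Sa by simp
qed

lemma yP_le_iff:
  assumes "0 \<le> \<alpha>" "0 < v" "0 \<le> Y"
  shows "yP v \<alpha> \<le> Y \<longleftrightarrow> v \<le> Y^2 - \<alpha> * Y"
proof -
  have f: "0 < yP v \<alpha>" "(yP v \<alpha>)^2 = \<alpha> * yP v \<alpha> + v" "\<alpha> < yP v \<alpha>"
    using yP_facts assms by auto
  define p where "p = yP v \<alpha>"
  have "Y^2 - \<alpha> * Y - v = (Y - p) * (Y + p - \<alpha>)" using f unfolding p_def[symmetric]
    by (simp add: power2_eq_square algebra_simps)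
  moreover have "Y + p - \<alpha> > 0" using f assms unfolding p_def by linarith
  ultimately have e: "Y^2 - \<alpha> * Y - v = (Y - p) * (Y + p - \<alpha>)" and K: "Y + p - \<alpha> > 0" by auto
  have "0 \<le> (Y - p) * (Y + p - \<alpha>) \<longleftrightarrow> 0 \<le> Y - p" using K by (simp add: zero_le_mult_iff)
  then show ?thesis unfolding p_def[symmetric] using e by (auto simp: algebra_simps)
qed

lemma yP_less_iff:
  assumes "0 \<le> \<alpha>" "0 < v" "0 \<le> Y"
  shows "yP v \<alpha> < Y \<longleftrightarrow> v < Y^2 - \<alpha> * Y"
proof -
  have f: "0 < yP v \<alpha>" "(yP v \<alpha>)^2 = \<alpha> * yP v \<alpha> + v" "\<alpha> < yP v \<alpha>"
    using yP_facts assms by auto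
  define p where "p = yP v \<alpha>"
  have "Y^2 - \<alpha> * Y - v = (Y - p) * (Y + p - \<alpha>)" using f unfolding p_def[symmetric]
    by (simp add: power2_eq_square algebra_simps)
  moreover have "Y + p - \<alpha> > 0" using f assms unfolding p_def by linarith
  ultimately have e: "Y^2 - \<alpha> * Y - v = (Y - p) * (Y + p - \<alpha>)" and K: "Y + p - \<alpha> > 0" by auto
  have "0 < (Y - p) * (Y + p - \<alpha>) \<longleftrightarrow> 0 < Y - p" using K by (simp add: zero_less_mult_iff)
  then show ?thesis unfolding p_def[symmetric] using e by (auto simp: algebra_simps)
qed

lemma Fm_le_yP:
  assumes "0 \<le> \<alpha>" "0 < v" "0 \<le> z"
  shows "Fm v \<alpha> z \<le> Fm v \<alpha> (yP v \<alpha>)"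
proof -
  have f: "0 < yP v \<alpha>" "(yP v \<alpha>)^2 = \<alpha> * yP v \<alpha> + v" "\<alpha> \<le> yP v \<alpha>"
    using yP_facts assms by auto
  define p where "p = yP v \<alpha>"
  have vv: "v - p^2 + \<alpha> * p = 0" using f unfolding p_def by simp
  have "Fm v \<alpha> p - Fm v \<alpha> z = (z - p)^2 * (2 * p/3 + z/3 - \<alpha>/2) + (p - z) * (v - p^2 + \<alpha> * p)"
    unfolding Fm_def by (simp add: power2_eq_square power3_eq_cube field_simps)
  then have "Fm v \<alpha> p - Fm v \<alpha> z = (z - p)^2 * (2 * p/3 + z/3 - \<alpha>/2)" using vv by simp
  moreover have "0 \<le> (z - p)^2 * (2 * p/3 + z/3 - \<alpha>/2)"
  proof -
    have "0 \<le> 2 * p/3 + z/3 - \<alpha>/2" using f(3) assms unfolding p_def by linarith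
    then show ?thesis by simp
  qed
  ultimately show ?thesis unfolding p_def by linarith
qed

lemma Fm_mono:
  assumes "0 \<le> \<alpha>" "0 < v" "0 \<le> z" "z \<le> b" "b \<le> yP v \<alpha>"
  shows "Fm v \<alpha> z \<le> Fm v \<alpha> b"
proof -
  have "\<not> (v < z^2 - \<alpha> * z)" using yP_less_iff[of \<alpha> v z] assms(1,2,3) assms(4,5) by linarith
  then have dz: "0 \<le> v + \<alpha> * z - z^2" by linarith
  have "\<not> (v < b^2 - \<alpha> * b)" using yP_less_iff[of \<alpha> v b] assms(1,2,3) assms(4,5) by linarith
  then have db: "0 \<le> v + \<alpha> * b - b^2" by linarith
  have "Fm v \<alpha> b - Fm v \<alpha> z = (b - z) * ((v + \<alpha> * z - z^2)/2 + (v + \<alpha> * b - b^2)/2 + (b-z)^2/6)"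
    unfolding Fm_def by (simp add: power2_eq_square power3_eq_cube field_simps)
  moreover have "0 \<le> (b - z) * ((v + \<alpha> * z - z^2)/2 + (v + \<alpha> * b - b^2)/2 + (b-z)^2/6)"
  proof (rule mult_nonneg_nonneg)
    show "0 \<le> b - z" using assms by simp
    show "0 \<le> (v + \<alpha> * z - z^2)/2 + (v + \<alpha> * b - b^2)/2 + (b-z)^2/6"
      using dz db by (intro add_nonneg_nonneg divide_nonneg_pos) auto
  qed
  ultimately show ?thesis by linarith
qed



lemma sq_ge: "0 < v \<Longrightarrow> sqrt (2 * v) \<le> y \<Longrightarrow> 2 * v \<le> y^2"
proof -
  assume h: "0 < v" "sqrt (2 * v) \<le> y"
  have "(sqrt (2 * v))^2 \<le> y^2" using h by (intro power_mono) auto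
  then show ?thesis using h by simp
qed

lemma W_low:
  assumes "0 \<le> \<alpha>" "0 \<le> y" "y \<le> sqrt (2 * v)" "0 < v"
  shows "W v \<alpha> y = Fm v \<alpha> y"
proof -
  have "xA v \<alpha> y = 0"
  proof (cases "sqrt (2 * v) \<le> y")
    case True
    then have "y = sqrt (2 * v)" using assms by auto
    then have "y^2 = 2 * v" using assms by simp
    then show ?thesis using True assms unfolding xA_def by simp
  next
    case False then show ?thesis unfolding xA_def by simp
  qed
  then show ?thesis using W_eq[OF assms(1,2,4)] unfolding Fw_def Fm_def
    by (simp add: power2_eq_square power3_eq_cube field_simps)
qed

lemma W_high:
  assumes "0 \<le> \<alpha>" "sqrt (2 * v) \<le> y" "0 < v"
  shows "W v \<alpha> y = Gf v \<alpha> y"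
proof -
  have y0: "0 \<le> y" using assms(2) real_sqrt_ge_zero[of "2 * v"] assms(3) by linarith
  have yy: "2 * v \<le> y^2" using sq_ge assms by blast
  define a where "a = sqrt (\<alpha>^2+y^2-2 * v) - \<alpha>"
  have rad: "0 \<le> \<alpha>^2+y^2-2 * v" using yy zero_le_power2[of \<alpha>] by linarith
  have S: "(sqrt (\<alpha>^2+y^2-2 * v))^2 = \<alpha>^2+y^2-2 * v" using rad by simp
  have rel: "a^2 + 2 * \<alpha> * a + 2 * v - y^2 = 0" unfolding a_def using S by (simp add: power2_eq_square algebra_simps)
  have xa: "xA v \<alpha> y = a" unfolding xA_def a_def using assms by simp
  have "W v \<alpha> y = Fw v \<alpha> y y - Fw v \<alpha> y a" using W_eq[OF assms(1) y0 assms(3)] xa by simp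
  also have "\<dots> = Fm v \<alpha> y + \<alpha> * a^2/2 + a^3/3"
  proof -
    have "Fw v \<alpha> y y - Fw v \<alpha> y a - (Fm v \<alpha> y + \<alpha> * a^2/2 + a^3/3) = -(a/2) * (a^2 + 2 * \<alpha> * a + 2 * v - y^2)"
      unfolding Fw_def Fm_def by (simp add: field_simps power2_eq_square power3_eq_cube)
    then show ?thesis using rel by simp
  qed
  finally show ?thesis unfolding Gf_def a_def .
qed



definition Fq :: "real \<Rightarrow> real \<Rightarrow> real \<Rightarrow> real" where
  "Fq v \<alpha> x = \<alpha> * x^2/2 + (v - 1/2) * x + x^3/6"

definition a1 :: "real \<Rightarrow> real \<Rightarrow> real" where
  "a1 v \<alpha> = sqrt (\<alpha>^2 + 1 - 2 * v) - \<alpha>"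

definition Dd :: "real \<Rightarrow> real \<Rightarrow> real" where
  "Dd v \<alpha> = Gf v \<alpha> 1 - Fm v \<alpha> (yP v \<alpha>)"

lemma a1_facts:
  assumes "0 \<le> \<alpha>" "0 < v" "v < 1/2"
  shows "0 \<le> a1 v \<alpha>" "(a1 v \<alpha>)^2 + 2 * \<alpha> * a1 v \<alpha> = 1 - 2 * v" "(a1 v \<alpha>)^2 \<le> 1 - 2 * v"
proof -
  define S where "S = sqrt (\<alpha>^2 + 1 - 2 * v)"
  have rad: "0 \<le> \<alpha>^2 + 1 - 2 * v" using assms zero_le_power2[of \<alpha>] by linarith
  have S2: "S^2 = \<alpha>^2 + 1 - 2 * v" unfolding S_def using rad by simp
  have "sqrt (\<alpha>^2) \<le> S" unfolding S_def using assms by (intro real_sqrt_le_mono) simp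
  then have Sa: "\<alpha> \<le> S" using assms by simp
  show "0 \<le> a1 v \<alpha>" unfolding a1_def S_def[symmetric] using Sa by simp
  show e: "(a1 v \<alpha>)^2 + 2 * \<alpha> * a1 v \<alpha> = 1 - 2 * v" unfolding a1_def S_def[symmetric]
    using S2 by (simp add: power2_eq_square algebra_simps)
  have "0 \<le> 2 * \<alpha> * a1 v \<alpha>" unfolding a1_def S_def[symmetric] using Sa assms by simp
  then show "(a1 v \<alpha>)^2 \<le> 1 - 2 * v" using e by linarith
qed

lemma Gf1_eq:
  assumes "0 \<le> \<alpha>" "0 < v" "v < 1/2"
  shows "Gf v \<alpha> 1 = Fm v \<alpha> 1 - Fq v \<alpha> (a1 v \<alpha>)"
proof -
  define a where "a = a1 v \<alpha>"
  have e: "a^2 + 2 * \<alpha> * a + 2 * v - 1 = 0" using a1_facts[OF assms] unfolding a_def by simp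
  have "Gf v \<alpha> 1 = Fm v \<alpha> 1 + \<alpha> * a^2/2 + a^3/3" unfolding Gf_def a_def a1_def by simp
  moreover have "Fq v \<alpha> a = - \<alpha> * a^2/2 - a^3/3 + (a/2) * (a^2 + 2 * \<alpha> * a + 2 * v - 1)"
    unfolding Fq_def by (simp add: field_simps power2_eq_square power3_eq_cube)
  ultimately show ?thesis using e unfolding a_def by simp
qed

lemma Fq_ge:
  assumes "0 \<le> \<alpha>" "0 < v" "v < 1/2" "0 \<le> x"
  shows "Fq v \<alpha> (a1 v \<alpha>) \<le> Fq v \<alpha> x"
proof -
  define a where "a = a1 v \<alpha>"
  have e: "a^2 + 2 * \<alpha> * a + 2 * v - 1 = 0" using a1_facts[OF assms(1-3)] unfolding a_def by simp
  have a0: "0 \<le> a" using a1_facts[OF assms(1-3)] unfolding a_def by simp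
  have "Fq v \<alpha> x - Fq v \<alpha> a = (x - a)^2 * (3 * \<alpha> + 2 * a + x)/6 + (x - a) * (a^2 + 2 * \<alpha> * a + 2 * v - 1)/2"
    unfolding Fq_def by (simp add: field_simps power2_eq_square power3_eq_cube)
  then have "Fq v \<alpha> x - Fq v \<alpha> a = (x - a)^2 * (3 * \<alpha> + 2 * a + x)/6" using e by simp
  moreover have "0 \<le> (x - a)^2 * (3 * \<alpha> + 2 * a + x)/6" using assms a0 by simp
  ultimately show ?thesis unfolding a_def by linarith
qed

lemma Gf1_ge:
  assumes "0 \<le> \<alpha>" "0 < v" "v < 1/2" "0 \<le> x"
  shows "Fm v \<alpha> 1 - Fq v \<alpha> x \<le> Gf v \<alpha> 1"
  using Gf1_eq[OF assms(1-3)] Fq_ge[OF assms] by linarith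

lemma yP_le_sqrt:
  assumes "0 \<le> \<alpha>" "0 < v" "\<alpha> \<le> sqrt (v/2)"
  shows "yP v \<alpha> \<le> sqrt (2 * v)"
proof -
  have "sqrt (v/2) * sqrt (2 * v) = v" using assms
    by (simp add: real_sqrt_mult[symmetric])
  moreover have "\<alpha> * sqrt (2 * v) \<le> sqrt (v/2) * sqrt (2 * v)" using assms by (intro mult_right_mono) auto
  ultimately have "\<alpha> * sqrt (2 * v) \<le> v" by simp
  moreover have "(sqrt (2 * v))^2 = 2 * v" using assms by simp
  ultimately show ?thesis using yP_le_iff[of \<alpha> v "sqrt (2 * v)"] assms by simp
qed

lemma yP_less_sqrt:
  assumes "0 \<le> \<alpha>" "0 < v" "\<alpha> < sqrt (v/2)"
  shows "yP v \<alpha> < sqrt (2 * v)"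
proof -
  have "sqrt (v/2) * sqrt (2 * v) = v" using assms
    by (simp add: real_sqrt_mult[symmetric])
  moreover have "\<alpha> * sqrt (2 * v) < sqrt (v/2) * sqrt (2 * v)" using assms by (intro mult_strict_right_mono) auto
  ultimately have "\<alpha> * sqrt (2 * v) < v" by simp
  moreover have "(sqrt (2 * v))^2 = 2 * v" using assms by simp
  ultimately show ?thesis using yP_less_iff[of \<alpha> v "sqrt (2 * v)"] assms by simp
qed

lemma yP_ge_sqrt:
  assumes "0 \<le> \<alpha>" "0 < v" "sqrt (v/2) \<le> \<alpha>"
  shows "sqrt (2 * v) \<le> yP v \<alpha>"
proof -
  have "sqrt (v/2) * sqrt (2 * v) = v" using assms
    by (simp add: real_sqrt_mult[symmetric])
  moreover have "sqrt (v/2) * sqrt (2 * v) \<le> \<alpha> * sqrt (2 * v)" using assms by (intro mult_right_mono) auto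
  ultimately have "v \<le> \<alpha> * sqrt (2 * v)" by simp
  moreover have "(sqrt (2 * v))^2 = 2 * v" using assms by simp
  ultimately have "\<not> (yP v \<alpha> < sqrt (2 * v))" using yP_less_iff[of \<alpha> v "sqrt (2 * v)"] assms by simp
  then show ?thesis by simp
qed

lemma Dd_mono:
  assumes "0 \<le> \<alpha>1" "\<alpha>1 \<le> \<alpha>2" "\<alpha>2 \<le> sqrt (v/2)" "0 < v" "v < 1/2"
  shows "Dd v \<alpha>1 \<le> Dd v \<alpha>2"
proof -
  have a2: "0 \<le> \<alpha>2" using assms by linarith
  define a where "a = a1 v \<alpha>1"
  have a0: "0 \<le> a" "a^2 \<le> 1 - 2 * v" using a1_facts[OF assms(1) assms(4,5)] unfolding a_def by auto
  have g1: "Gf v \<alpha>1 1 = Fm v \<alpha>1 1 - Fq v \<alpha>1 a" using Gf1_eq[OF assms(1) assms(4,5)] unfolding a_def .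
  have g2: "Fm v \<alpha>2 1 - Fq v \<alpha>2 a \<le> Gf v \<alpha>2 1" using Gf1_ge[OF a2 assms(4,5) a0(1)] .
  have lin1: "Fm v \<alpha>2 1 - Fq v \<alpha>2 a = Fm v \<alpha>1 1 - Fq v \<alpha>1 a + (\<alpha>2 - \<alpha>1) * (1 - a^2)/2"
    unfolding Fm_def Fq_def by (simp add: field_simps)
  define p where "p = yP v \<alpha>2"
  have p0: "0 \<le> p" using yP_facts[OF a2 assms(4)] unfolding p_def by simp
  have pp: "p \<le> sqrt (2 * v)" using yP_le_sqrt[OF a2 assms(4) assms(3)] unfolding p_def .
  have "p^2 \<le> (sqrt (2 * v))^2" using p0 pp by (intro power_mono) auto
  then have p2: "p^2 \<le> 2 * v" using assms by simp
  have m1: "Fm v \<alpha>1 p \<le> Fm v \<alpha>1 (yP v \<alpha>1)" using Fm_le_yP[OF assms(1) assms(4) p0] .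
  have lin2: "Fm v \<alpha>1 p = Fm v \<alpha>2 p - (\<alpha>2 - \<alpha>1) * p^2/2" unfolding Fm_def by (simp add: field_simps)
  have "0 \<le> (\<alpha>2 - \<alpha>1) * (1 - a^2 - p^2)/2" using assms a0 p2 by (intro divide_nonneg_pos mult_nonneg_nonneg) auto
  then show ?thesis unfolding Dd_def p_def[symmetric] using g1 g2 lin1 m1 lin2
    by (simp add: field_simps)
qed

lemma Dd_lip:
  assumes "0 \<le> \<alpha>1" "\<alpha>1 \<le> \<alpha>2" "0 < v" "v < 1/2"
  shows "Dd v \<alpha>2 - (\<alpha>2 - \<alpha>1)/2 \<le> Dd v \<alpha>1"
proof -
  have a2: "0 \<le> \<alpha>2" using assms by linarith
  define a where "a = a1 v \<alpha>2"
  have a0: "0 \<le> a" "a^2 \<le> 1 - 2 * v" using a1_facts[OF a2 assms(3,4)] unfolding a_def by auto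
  have g2: "Gf v \<alpha>2 1 = Fm v \<alpha>2 1 - Fq v \<alpha>2 a" using Gf1_eq[OF a2 assms(3,4)] unfolding a_def .
  have g1: "Fm v \<alpha>1 1 - Fq v \<alpha>1 a \<le> Gf v \<alpha>1 1" using Gf1_ge[OF assms(1) assms(3,4) a0(1)] .
  have lin1: "Fm v \<alpha>2 1 - Fq v \<alpha>2 a = Fm v \<alpha>1 1 - Fq v \<alpha>1 a + (\<alpha>2 - \<alpha>1) * (1 - a^2)/2"
    unfolding Fm_def Fq_def by (simp add: field_simps)
  define p where "p = yP v \<alpha>1"
  have p0: "0 \<le> p" using yP_facts[OF assms(1) assms(3)] unfolding p_def by simp
  have m1: "Fm v \<alpha>2 p \<le> Fm v \<alpha>2 (yP v \<alpha>2)" using Fm_le_yP[OF a2 assms(3) p0] .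
  have lin2: "Fm v \<alpha>1 p = Fm v \<alpha>2 p - (\<alpha>2 - \<alpha>1) * p^2/2" unfolding Fm_def by (simp add: field_simps)
  have "0 \<le> (\<alpha>2 - \<alpha>1) * p^2/2" using assms by simp
  moreover have "(\<alpha>2 - \<alpha>1) * (1 - a^2)/2 \<le> (\<alpha>2 - \<alpha>1)/2"
  proof -
    have "0 \<le> (\<alpha>2 - \<alpha>1) * a^2" using assms by simp
    moreover have "(\<alpha>2 - \<alpha>1) * (1 - a^2)/2 = (\<alpha>2 - \<alpha>1)/2 - ((\<alpha>2 - \<alpha>1) * a^2)/2"
      by (simp add: field_simps)
    ultimately show ?thesis by linarith
  qed
  ultimately show ?thesis unfolding Dd_def p_def[symmetric] using g1 g2 lin1 m1 lin2
    by (simp add: field_simps)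
qed

lemma Fm_taylor:
  assumes "0 \<le> y" "3 * c < 4 * Y"
  shows "Fm v c y \<le> Fm v c Y + 3 * (v + c * Y - Y^2)^2 / (2 * (4 * Y - 3 * c))"
proof -
  define d where "d = y - Y"
  define fp where "fp = v + c * Y - Y^2"
  define K where "K = 4 * Y - 3 * c"
  have K0: "0 < K" unfolding K_def using assms by simp
  have id: "Fm v c y = Fm v c Y + fp * d - K * d^2/6 - d^2 * y/3"
    unfolding Fm_def fp_def K_def d_def by (simp add: field_simps power2_eq_square power3_eq_cube)
  have "0 \<le> d^2 * y/3" using assms by simp
  moreover have "fp * d - K * d^2/6 \<le> 3 * fp^2 / (2 * K)"
  proof -
    have "0 \<le> (K * d - 3 * fp)^2" by simp
    then have "0 \<le> (K * d - 3 * fp)^2 / (6 * K)" using K0 by simp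
    moreover have "(K * d - 3 * fp)^2 / (6 * K) = 3 * fp^2 / (2 * K) - (fp * d - K * d^2/6)"
      using K0 by (simp add: field_simps power2_eq_square)
    ultimately show ?thesis by linarith
  qed
  ultimately show ?thesis using id unfolding fp_def[symmetric] K_def[symmetric] by linarith
qed

lemma Dd_pos:
  assumes "0 \<le> c" "c \<le> sqrt (v/2)" "0 < v" "v < 1/2" "m \<le> 1" "0 < Y" "3 * c < 4 * Y"
    and I3: "0 < 2 * (4 * Y - 3 * c) * ((m * (c + v) - (1 + c) * m^2/2 + m^3/6) - (c * Y^2/2 + v * Y - Y^3/3)) - 3 * (v + c * Y - Y^2)^2"
  shows "0 < Dd v c"
proof -
  have x0: "0 \<le> 1 - m" using assms by simp
  have g: "Fm v c 1 - Fq v c (1 - m) \<le> Gf v c 1" using Gf1_ge[OF assms(1) assms(3,4) x0] .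
  have L: "Fm v c 1 - Fq v c (1 - m) = m * (c + v) - (1 + c) * m^2/2 + m^3/6"
    unfolding Fm_def Fq_def by (simp add: field_simps power2_eq_square power3_eq_cube)
  have p0: "0 \<le> yP v c" using yP_facts[OF assms(1) assms(3)] by simp
  have t: "Fm v c (yP v c) \<le> Fm v c Y + 3 * (v + c * Y - Y^2)^2 / (2 * (4 * Y - 3 * c))"
    using Fm_taylor[OF p0 assms(7)] .
  define K where "K = 4 * Y - 3 * c"
  have K0: "0 < K" unfolding K_def using assms by simp
  have "3 * (v + c * Y - Y^2)^2 / (2 * K) < (m * (c + v) - (1 + c) * m^2/2 + m^3/6) - Fm v c Y"
    using I3 K0 unfolding K_def[symmetric] Fm_def by (simp add: field_simps)
  then show ?thesis unfolding Dd_def using g L t unfolding K_def by linarith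
qed



definition gg :: "real \<Rightarrow> real \<Rightarrow> real \<Rightarrow> real" where
  "gg v c t = (c + v) * t - (1 + c) * t^2 + t^3/2"

definition gd :: "real \<Rightarrow> real \<Rightarrow> real \<Rightarrow> real" where
  "gd v c t = c + v - 2 * (1 + c) * t + 3/2 * t^2"

lemma gg_taylor:
  assumes "t \<le> 1" "0 < 1 + 2 * c - 2 * t0"
  shows "gg v c t \<le> gg v c t0 + (gd v c t0)^2 / (2 * (1 + 2 * c - 2 * t0))"
proof -
  define d where "d = t - t0"
  define M where "M = 1 + 2 * c - 2 * t0"
  have M0: "0 < M" using assms unfolding M_def by simp
  have id: "gg v c t = gg v c t0 + gd v c t0 * d - M * d^2/2 + d^2 * (t - 1)/2"
    unfolding gg_def gd_def M_def d_def by (simp add: field_simps power2_eq_square power3_eq_cube)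
  have "d^2 * (t - 1)/2 \<le> 0" using assms by (simp add: mult_nonneg_nonpos divide_nonpos_pos)
  moreover have "gd v c t0 * d - M * d^2/2 \<le> (gd v c t0)^2 / (2 * M)"
  proof -
    have "0 \<le> (M * d - gd v c t0)^2 / (2 * M)" using M0 by simp
    moreover have "(M * d - gd v c t0)^2 / (2 * M) = (gd v c t0)^2 / (2 * M) - (gd v c t0 * d - M * d^2/2)"
      using M0 by (simp add: field_simps power2_eq_square)
    ultimately show ?thesis by linarith
  qed
  ultimately show ?thesis using id unfolding M_def[symmetric] by linarith
qed

lemma prof_bound:
  assumes "0 < v" "v < 1/2" "0 \<le> \<alpha>" "\<alpha> \<le> c" "0 \<le> p" "0 < 1 + 2 * c - 2 * t0"
  shows "p * (1 + \<alpha> - sqrt (\<alpha>\<^sup>2 + 1 - 2 * (v - p))) \<le> gg v c t0 + (gd v c t0)^2 / (2 * (1 + 2 * c - 2 * t0))"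
    (is "?P \<le> ?B")
proof -
  define S where "S = sqrt (\<alpha>\<^sup>2 + 1 - 2 * (v - p))"
  define t where "t = 1 + \<alpha> - S"
  have "0 \<le> \<alpha>\<^sup>2 + 1 - 2 * v + 2 * p" using assms zero_le_power2[of \<alpha>] by linarith
  then have rad: "0 \<le> \<alpha>\<^sup>2 + 1 - 2 * (v - p)" by (simp add: algebra_simps)
  have S2: "S^2 = \<alpha>\<^sup>2 + 1 - 2 * (v - p)" unfolding S_def using rad by simp
  have "sqrt (\<alpha>^2) \<le> S" unfolding S_def using assms by (intro real_sqrt_le_mono) simp
  then have Sa: "\<alpha> \<le> S" using assms by simp
  have t1: "t \<le> 1" unfolding t_def using Sa by simp
  have pe: "p = \<alpha> + v - (1 + \<alpha>) * t + t^2/2"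
  proof -
    have "S = 1 + \<alpha> - t" unfolding t_def by simp
    then have "(1 + \<alpha> - t)^2 = \<alpha>\<^sup>2 + 1 - 2 * (v - p)" using S2 by simp
    then show ?thesis by (simp add: field_simps power2_eq_square)
  qed
  have P: "?P = p * t" unfolding t_def S_def by simp
  have B0: "0 \<le> ?B" using gg_taylor[of 0 c t0 v] assms unfolding gg_def by simp
  show ?thesis
  proof (cases "t \<le> 0")
    case True
    then have "p * t \<le> 0" using assms by (simp add: mult_nonneg_nonpos)
    then show ?thesis using P B0 by linarith
  next
    case False
    have "p * t = gg v \<alpha> t" unfolding gg_def by (subst pe) (simp add: field_simps power2_eq_square power3_eq_cube)
    also have "\<dots> \<le> gg v c t"
    proof -
      have "gg v c t - gg v \<alpha> t = (c - \<alpha>) * (t * (1 - t))" unfolding gg_def by (simp add: field_simps power2_eq_square)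
      moreover have "0 \<le> (c - \<alpha>) * (t * (1 - t))" using False t1 assms by simp
      ultimately show ?thesis by linarith
    qed
    also have "\<dots> \<le> ?B" using gg_taylor[OF t1 assms(6)] .
    finally have "p * t \<le> ?B" .
    then show ?thesis using P by linarith
  qed
qed

lemma PiS_lt:
  assumes "0 < v" "v < 1/2" "0 \<le> \<alpha>" "\<alpha> \<le> c" "0 < 1 + 2 * c - 2 * t0"
    and I1: "0 < 2 * (1 + 2 * c - 2 * t0) * (T - gg v c t0) - (gd v c t0)^2"
  shows "PiS v \<alpha> < T"
proof -
  define M where "M = 1 + 2 * c - 2 * t0"
  have M0: "0 < M" using assms unfolding M_def by simp
  have "PiS v \<alpha> \<le> gg v c t0 + (gd v c t0)^2 / (2 * M)"
    unfolding PiS_def M_def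
  proof (rule cSUP_least)
    show "{0::real..} \<noteq> {}" by auto
    fix x :: real assume "x \<in> {0..}"
    then have "0 \<le> x" by simp
    then show "x * (1 + \<alpha> - sqrt (\<alpha>\<^sup>2 + 1 - 2 * (v - x))) \<le> gg v c t0 + (gd v c t0)^2 / (2 * (1 + 2 * c - 2 * t0))"
      by (rule prof_bound[OF assms(1-4) _ assms(5)])
  qed
  moreover have "gg v c t0 + (gd v c t0)^2 / (2 * M) < T"
  proof -
    have "(gd v c t0)^2 < 2 * M * (T - gg v c t0)" using I1 unfolding M_def by simp
    then have "(gd v c t0)^2 / (2 * M) < T - gg v c t0" using M0 by (simp add: field_simps)
    then show ?thesis by simp
  qed
  ultimately show ?thesis by linarith
qed

lemma prof_le4:
  assumes "0 < v" "v < 1/2" "0 \<le> \<alpha>" "\<alpha> \<le> 1" "0 \<le> p"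
  shows "p * (1 + \<alpha> - sqrt (\<alpha>\<^sup>2 + 1 - 2 * (v - p))) \<le> 4"
proof (cases "p \<le> 2")
  case True
  have "0 \<le> \<alpha>\<^sup>2 + 1 - 2 * v + 2 * p" using assms zero_le_power2[of \<alpha>] by linarith
  then have rad: "0 \<le> \<alpha>\<^sup>2 + 1 - 2 * (v - p)" by (simp add: algebra_simps)
  have "p * (1 + \<alpha> - sqrt (\<alpha>\<^sup>2 + 1 - 2 * (v - p))) \<le> p * (1 + \<alpha>)"
    using assms rad by (intro mult_left_mono) auto
  also have "\<dots> \<le> 2 * 2" using True assms by (intro mult_mono) auto
  finally show ?thesis by simp
next
  case False
  have "(1 + \<alpha>)^2 \<le> \<alpha>\<^sup>2 + 1 - 2 * (v - p)" using False assms by (simp add: power2_eq_square algebra_simps)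
  then have "sqrt ((1 + \<alpha>)^2) \<le> sqrt (\<alpha>\<^sup>2 + 1 - 2 * (v - p))" by (rule real_sqrt_le_mono)
  then have "1 + \<alpha> \<le> sqrt (\<alpha>\<^sup>2 + 1 - 2 * (v - p))" using assms by simp
  then have "p * (1 + \<alpha> - sqrt (\<alpha>\<^sup>2 + 1 - 2 * (v - p))) \<le> 0" using assms by (simp add: mult_nonneg_nonpos)
  then show ?thesis by simp
qed

lemma PiS_ge:
  assumes "0 < v" "v < 1/2" "0 \<le> \<alpha>" "\<alpha> \<le> 1" "0 \<le> p"
  shows "p * (1 + \<alpha> - sqrt (\<alpha>\<^sup>2 + 1 - 2 * (v - p))) \<le> PiS v \<alpha>"
  unfolding PiS_def
proof (rule cSUP_upper)
  show "p \<in> {0..}" using assms by simp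
  show "bdd_above ((\<lambda>p. p * (1 + \<alpha> - sqrt (\<alpha>\<^sup>2 + 1 - 2 * (v - p)))) ` {0..})"
    unfolding bdd_above_def using prof_le4[OF assms(1-4)] by auto
qed

lemma T_eq: "0 < v \<Longrightarrow> (2 * v/3) powr (3/2) = (2 * v/3) * sqrt (2 * v/3)"
proof -
  assume "0 < v"
  have e: "(3/2::real) = 1 + 1/2" by simp
  have "(2 * v/3) powr (3/2) = (2 * v/3) powr (1 + 1/2)" by (simp only: e)
  also have "\<dots> = (2 * v/3) * (2 * v/3) powr (1/2)" using \<open>0 < v\<close> by (subst powr_add) simp
  also have "\<dots> = (2 * v/3) * sqrt (2 * v/3)" using \<open>0 < v\<close> by (simp add: powr_half_sqrt)
  finally show ?thesis .
qed

lemma PiS_big: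
  assumes "0 < v" "v < 1/2"
  shows "(2 * v/3) powr (3/2) \<le> PiS v (3/5 * sqrt (2 * v))"
proof -
  define q where "q = sqrt (2 * v)"
  have q0: "0 < q" unfolding q_def using assms by simp
  have q1: "q < 1" unfolding q_def using assms by simp
  have vq: "v = q^2/2" unfolding q_def using assms by simp
  define a where "a = 3/5 * q"
  have a0: "0 \<le> a" "a \<le> 1" unfolding a_def using q0 q1 by auto
  have "(1 + a^2/2)^2 = a^2 + 1 + (a^2)^2/4" by (simp add: power2_eq_square field_simps)
  then have "a^2 + 1 \<le> (1 + a^2/2)^2" by simp
  then have "sqrt (a^2 + 1) \<le> sqrt ((1 + a^2/2)^2)" by (rule real_sqrt_le_mono)
  then have sa: "sqrt (a^2 + 1) \<le> 1 + a^2/2" by simp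
  have "v * (a - a^2/2) \<le> v * (1 + a - sqrt (a\<^sup>2 + 1 - 2 * (v - v)))"
    using sa assms by (intro mult_left_mono) auto
  also have "\<dots> \<le> PiS v a" using PiS_ge[OF assms a0, of v] assms by simp
  finally have lo: "v * (a - a^2/2) \<le> PiS v a" .
  have "v * (a - a^2/2) = q^3 * (3/10 - 9/100 * q)" unfolding vq a_def by (simp add: field_simps power2_eq_square power3_eq_cube)
  moreover have "q^3 * (21/100) \<le> q^3 * (3/10 - 9/100 * q)" using q0 q1 by (intro mult_left_mono) auto
  ultimately have lo2: "q^3 * (21/100) \<le> PiS v a" using lo by linarith
  have s3: "17/10 \<le> sqrt (3::real)"
    by (rule real_le_rsqrt) (simp add: power2_eq_square)
  have "(2 * v/3) powr (3/2) = (q^2/3) * sqrt (q^2/3)" using T_eq[OF assms(1)] unfolding vq by simp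
  also have "\<dots> = q^3 / (3 * sqrt 3)" using q0 by (simp add: real_sqrt_divide power3_eq_cube power2_eq_square)
  also have "\<dots> \<le> q^3 * (21/100)"
  proof -
    have "0 < sqrt (3::real)" by simp
    have "q^3 / (3 * sqrt 3) \<le> q^3 / (3 * (17/10))" using q0 s3 by (intro divide_left_mono) auto
    also have "\<dots> \<le> q^3 * (21/100)" using q0 by simp
    finally show ?thesis .
  qed
  finally show ?thesis using lo2 unfolding a_def q_def by linarith
qed


lemma r_bound: assumes "0 < r" "3 * r^4 < (1::real)" shows "r < 19/25"
proof (rule ccontr)
  assume "\<not> r < 19/25"
  then have "(19/25::real)^4 \<le> r^4" by (intro power_mono) auto
  then have "3 * (19/25::real)^4 < 1" using assms(2) by linarith
  then show False by (simp add: power_divide)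
qed

definition cc :: "real \<Rightarrow> real" where
  "cc r = 1/2 + (3 * r^4-1) * (1/2 - 9/5 * r^3 + 3 * r^4 - 3/2 * r^5)"
definition tt :: "real \<Rightarrow> real" where
  "tt r = 1 - r^2 + (3 * r^4-1) * (1 - r^2 - 4/5 * r^3 + 2 * r^4)"
definition mm :: "real \<Rightarrow> real" where
  "mm r = 1 + (3 * r^4-1) * (1 - 7/4 * r^3 + 7/3 * r^4)"
definition YY :: "real \<Rightarrow> real" where
  "YY r = 1 + (3 * r^4-1) * (1 - 27/20 * r^2 + 3/5 * r^3)"

lemma id_I1: "2 * (1+2 * cc r-2 * tt r) * (r^6 - ((cc r+(3/2 * r^4)) * tt r - (1+cc r) * (tt r)^2 + (tt r)^3/2)) - (cc r+(3/2 * r^4)-2 * (1+cc r) * tt r+3/2 * (tt r)^2)^2 = r^6 * (1-3 * r^4)^1 * ((2046363078989088535308837890625/13569980418174090907801371961) * r^0 * ((19/25)-r)^22 + (46748027671128511428833007812500/13569980418174090907801371961) * r^1 * ((19/25)-r)^21 + (492582330480217933654785156250000/13569980418174090907801371961) * r^2 * ((19/25)-r)^20 + (3198835634975694119930267333984375/13569980418174090907801371961) * r^3 * ((19/25)-r)^19 + (3034741161973215639591217041015625/2856837982773492822695025676) * r^4 * ((19/25)-r)^18 + (5062621443229727447032928466796875/1428418991386746411347512838) * r^5 * ((19/25)-r)^17 + (26065437084364928305149078369140625/2856837982773492822695025676) * r^6 * ((19/25)-r)^16 + (26660168874033592641353607177734375/1428418991386746411347512838) * r^7 * ((19/25)-r)^15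 + (88721604383313135802745819091796875/2856837982773492822695025676) * r^8 * ((19/25)-r)^14 + (30626098900035293900966644287109375/714209495693373205673756419) * r^9 * ((19/25)-r)^13 + (71383427663053608477878570556640625/1428418991386746411347512838) * r^10 * ((19/25)-r)^12 + (35528588765776589305305480957031250/714209495693373205673756419) * r^11 * ((19/25)-r)^11 + (121256687572455839550083160400390625/2856837982773492822695025676) * r^12 * ((19/25)-r)^10 + (44022982088282450593657562255859375/1428418991386746411347512838) * r^13 * ((19/25)-r)^9 + (53486346424575634143327787353515625/2856837982773492822695025676) * r^14 * ((19/25)-r)^8 + (13268786613146690844260492724609375/1428418991386746411347512838) * r^15 * ((19/25)-r)^7 + (10445249610340001342862321806640625/2856837982773492822695025676) * r^16 * ((19/25)-r)^6 + (787845233528945307407675567812500/714209495693373205673756419) * r^17 * ((19/25)-r)^5 + (175207980387780893215731426416875/714209495693373205673756419) * r^18 * ((19/25)-r)^4 + (524039728614712975447955591048250/13569980418174090907801371961) * r^19 * ((19/25)-r)^3 + (115974038668853901954353616002225/27139960836348181815602743922) * r^20 * ((19/25)-r)^2 + (4643993013835632977578581013020/13569980418174090907801371961) * r^21 * ((19/25)-r)^1 + (223942085823594442840937616008/13569980418174090907801371961) * r^22 * ((19/25)-r)^0)"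
  unfolding cc_def tt_def mm_def YY_def by algebra

lemma pos_I1: assumes "0 < r" "3 * r^4 < 1" shows "0 < 2 * (1+2 * cc r-2 * tt r) * (r^6 - ((cc r+(3/2 * r^4)) * tt r - (1+cc r) * (tt r)^2 + (tt r)^3/2)) - (cc r+(3/2 * r^4)-2 * (1+cc r) * tt r+3/2 * (tt r)^2)^2"
proof -
  have "0 < ((2046363078989088535308837890625/13569980418174090907801371961) * r^0 * ((19/25)-r)^22 + (46748027671128511428833007812500/13569980418174090907801371961) * r^1 * ((19/25)-r)^21 + (492582330480217933654785156250000/13569980418174090907801371961) * r^2 * ((19/25)-r)^20 + (3198835634975694119930267333984375/13569980418174090907801371961) * r^3 * ((19/25)-r)^19 + (3034741161973215639591217041015625/2856837982773492822695025676) * r^4 * ((19/25)-r)^18 + (5062621443229727447032928466796875/1428418991386746411347512838) * r^5 * ((19/25)-r)^17 + (26065437084364928305149078369140625/2856837982773492822695025676) * r^6 * ((19/25)-r)^16 + (26660168874033592641353607177734375/1428418991386746411347512838) * r^7 * ((19/25)-r)^15 + (88721604383313135802745819091796875/2856837982773492822695025676) * r^8 * ((19/25)-r)^14 + (30626098900035293900966644287109375/714209495693373205673756419) * r^9 * ((19/25)-r)^13 + (71383427663053608477878570556640625/1428418991386746411347512838) * r^10 * ((19/25)-r)^12 + (35528588765776589305305480957031250/714209495693373205673756419) * r^11 * ((19/25)-r)^11 + (121256687572455839550083160400390625/2856837982773492822695025676) * r^12 * ((19/25)-r)^10 + (44022982088282450593657562255859375/1428418991386746411347512838) * r^13 * ((19/25)-r)^9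 + (53486346424575634143327787353515625/2856837982773492822695025676) * r^14 * ((19/25)-r)^8 + (13268786613146690844260492724609375/1428418991386746411347512838) * r^15 * ((19/25)-r)^7 + (10445249610340001342862321806640625/2856837982773492822695025676) * r^16 * ((19/25)-r)^6 + (787845233528945307407675567812500/714209495693373205673756419) * r^17 * ((19/25)-r)^5 + (175207980387780893215731426416875/714209495693373205673756419) * r^18 * ((19/25)-r)^4 + (524039728614712975447955591048250/13569980418174090907801371961) * r^19 * ((19/25)-r)^3 + (115974038668853901954353616002225/27139960836348181815602743922) * r^20 * ((19/25)-r)^2 + (4643993013835632977578581013020/13569980418174090907801371961) * r^21 * ((19/25)-r)^1 + (223942085823594442840937616008/13569980418174090907801371961) * r^22 * ((19/25)-r)^0)" using assms r_bound[OF assms] by (intro add_pos_pos mult_pos_pos zero_less_power) auto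
  moreover have "0 < 1-3 * r^4" using assms by simp
  ultimately show ?thesis unfolding id_I1 using assms by simp
qed

lemma id_I3: "2 * (4 * YY r-3 * cc r) * ((mm r * (cc r+(3/2 * r^4)) - (1+cc r) * (mm r)^2/2 + (mm r)^3/6) - (cc r * (YY r)^2/2 + (3/2 * r^4) * YY r - (YY r)^3/3)) - 3 * ((3/2 * r^4)+cc r * YY r-(YY r)^2)^2 = r^8 * (1-3 * r^4)^2 * ((15489128418266773223876953125/26656601676265277832407296) * r^0 * ((19/25)-r)^18 + (113830287940800189971923828125/13328300838132638916203648) * r^1 * ((19/25)-r)^17 + (1591443606205284595489501953125/26656601676265277832407296) * r^2 * ((19/25)-r)^16 + (5311184393449127674102783203125/19992451257198958374305472) * r^3 * ((19/25)-r)^15 + (33907908937312662601470947265625/39984902514397916748610944) * r^4 * ((19/25)-r)^14 + (82765713120412628650665283203125/39984902514397916748610944) * r^5 * ((19/25)-r)^13 + (160205672025109192180633544921875/39984902514397916748610944) * r^6 * ((19/25)-r)^12 + (564031046724793659008026123046875/89966030657395312684374624) * r^7 * ((19/25)-r)^11 + (1916838000535274227862701416015625/239909415086387500491665664) * r^8 * ((19/25)-r)^10 + (2984188633301783109222430419921875/359864122629581250737498496) * r^9 * ((19/25)-r)^9 + (1673956797661884481224966552734375/239909415086387500491665664) * r^10 * ((19/25)-r)^8 + (35409709924923135298417392578125/7497169221449609390364552) * r^11 * ((19/25)-r)^7 + (152581942696571457267452744921875/59977353771596875122916416) * r^12 * ((19/25)-r)^6 + (128716480947579889691363611328125/119954707543193750245832832)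 * r^13 * ((19/25)-r)^5 + (41615712513514432250846304734375/119954707543193750245832832) * r^14 * ((19/25)-r)^4 + (5011594526143644646310225640625/59977353771596875122916416) * r^15 * ((19/25)-r)^3 + (1301612222275005397255229478625/89966030657395312684374624) * r^16 * ((19/25)-r)^2 + (33836556832396797293668580725/19992451257198958374305472) * r^17 * ((19/25)-r)^1 + (19442067293725952609847958051/179932061314790625368749248) * r^18 * ((19/25)-r)^0)"
  unfolding cc_def tt_def mm_def YY_def by algebra

lemma pos_I3: assumes "0 < r" "3 * r^4 < 1" shows "0 < 2 * (4 * YY r-3 * cc r) * ((mm r * (cc r+(3/2 * r^4)) - (1+cc r) * (mm r)^2/2 + (mm r)^3/6) - (cc r * (YY r)^2/2 + (3/2 * r^4) * YY r - (YY r)^3/3)) - 3 * ((3/2 * r^4)+cc r * YY r-(YY r)^2)^2"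
proof -
  have "0 < ((15489128418266773223876953125/26656601676265277832407296) * r^0 * ((19/25)-r)^18 + (113830287940800189971923828125/13328300838132638916203648) * r^1 * ((19/25)-r)^17 + (1591443606205284595489501953125/26656601676265277832407296) * r^2 * ((19/25)-r)^16 + (5311184393449127674102783203125/19992451257198958374305472) * r^3 * ((19/25)-r)^15 + (33907908937312662601470947265625/39984902514397916748610944) * r^4 * ((19/25)-r)^14 + (82765713120412628650665283203125/39984902514397916748610944) * r^5 * ((19/25)-r)^13 + (160205672025109192180633544921875/39984902514397916748610944) * r^6 * ((19/25)-r)^12 + (564031046724793659008026123046875/89966030657395312684374624) * r^7 * ((19/25)-r)^11 + (1916838000535274227862701416015625/239909415086387500491665664) * r^8 * ((19/25)-r)^10 + (2984188633301783109222430419921875/359864122629581250737498496) * r^9 * ((19/25)-r)^9 + (1673956797661884481224966552734375/239909415086387500491665664) * r^10 * ((19/25)-r)^8 + (35409709924923135298417392578125/7497169221449609390364552) * r^11 * ((19/25)-r)^7 + (152581942696571457267452744921875/59977353771596875122916416) * r^12 * ((19/25)-r)^6 + (128716480947579889691363611328125/119954707543193750245832832) * r^13 * ((19/25)-r)^5 + (41615712513514432250846304734375/119954707543193750245832832) * r^14 * ((19/25)-r)^4 + (5011594526143644646310225640625/59977353771596875122916416) * r^15 * ((19/25)-r)^3 + (1301612222275005397255229478625/89966030657395312684374624) * r^16 * ((19/25)-r)^2 + (33836556832396797293668580725/19992451257198958374305472) * r^17 * ((19/25)-r)^1 + (19442067293725952609847958051/179932061314790625368749248) * r^18 * ((19/25)-r)^0)"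 using assms r_bound[OF assms] by (intro add_pos_pos mult_pos_pos zero_less_power) auto
  moreover have "0 < 1-3 * r^4" using assms by simp
  ultimately show ?thesis unfolding id_I3 using assms by simp
qed

lemma id_mu: "1+2 * cc r-2 * tt r = r^0 * (1-3 * r^4)^0 * ((3814697265625/322687697779) * r^0 * ((19/25)-r)^9 + (34332275390625/322687697779) * r^1 * ((19/25)-r)^8 + (137329101562500/322687697779) * r^2 * ((19/25)-r)^7 + (323783691406250/322687697779) * r^3 * ((19/25)-r)^6 + (494383251953125/322687697779) * r^4 * ((19/25)-r)^5 + (501973700000000/322687697779) * r^5 * ((19/25)-r)^4 + (339800956812500/322687697779) * r^6 * ((19/25)-r)^3 + (151222323291250/322687697779) * r^7 * ((19/25)-r)^2 + (43292216069900/322687697779) * r^8 * ((19/25)-r)^1 + (4404044295514/322687697779) * r^9 * ((19/25)-r)^0)"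
  unfolding cc_def tt_def mm_def YY_def by algebra

lemma pos_mu: assumes "0 < r" "3 * r^4 < 1" shows "0 < 1+2 * cc r-2 * tt r"
proof -
  have "0 < ((3814697265625/322687697779) * r^0 * ((19/25)-r)^9 + (34332275390625/322687697779) * r^1 * ((19/25)-r)^8 + (137329101562500/322687697779) * r^2 * ((19/25)-r)^7 + (323783691406250/322687697779) * r^3 * ((19/25)-r)^6 + (494383251953125/322687697779) * r^4 * ((19/25)-r)^5 + (501973700000000/322687697779) * r^5 * ((19/25)-r)^4 + (339800956812500/322687697779) * r^6 * ((19/25)-r)^3 + (151222323291250/322687697779) * r^7 * ((19/25)-r)^2 + (43292216069900/322687697779) * r^8 * ((19/25)-r)^1 + (4404044295514/322687697779) * r^9 * ((19/25)-r)^0)" using assms r_bound[OF assms] by (intro add_pos_pos mult_pos_pos zero_less_power) auto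
  moreover have "0 < 1-3 * r^4" using assms by simp
  ultimately show ?thesis unfolding id_mu using assms by simp
qed

lemma id_Yc: "4 * YY r-3 * cc r = r^2 * (1-3 * r^4)^0 * ((32958984375/893871739) * r^0 * ((19/25)-r)^7 + (194531250000/893871739) * r^1 * ((19/25)-r)^6 + (1066435546875/1787743478) * r^2 * ((19/25)-r)^5 + (889627734375/893871739) * r^3 * ((19/25)-r)^4 + (930406246875/893871739) * r^4 * ((19/25)-r)^3 + (596012938500/893871739) * r^5 * ((19/25)-r)^2 + (395895692775/1787743478) * r^6 * ((19/25)-r)^1 + (52852393353/1787743478) * r^7 * ((19/25)-r)^0)"
  unfolding cc_def tt_def mm_def YY_def by algebra

lemma pos_Yc: assumes "0 < r" "3 * r^4 < 1" shows "0 < 4 * YY r-3 * cc r"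
proof -
  have "0 < ((32958984375/893871739) * r^0 * ((19/25)-r)^7 + (194531250000/893871739) * r^1 * ((19/25)-r)^6 + (1066435546875/1787743478) * r^2 * ((19/25)-r)^5 + (889627734375/893871739) * r^3 * ((19/25)-r)^4 + (930406246875/893871739) * r^4 * ((19/25)-r)^3 + (596012938500/893871739) * r^5 * ((19/25)-r)^2 + (395895692775/1787743478) * r^6 * ((19/25)-r)^1 + (52852393353/1787743478) * r^7 * ((19/25)-r)^0)" using assms r_bound[OF assms] by (intro add_pos_pos mult_pos_pos zero_less_power) auto
  moreover have "0 < 1-3 * r^4" using assms by simp
  ultimately show ?thesis unfolding id_Yc using assms by simp
qed

lemma id_c: "cc r = r^3 * (1-3 * r^4)^0 * ((439453125/47045881) * r^0 * ((19/25)-r)^6 + (4716796875/94091762) * r^1 * ((19/25)-r)^5 + (5411718750/47045881) * r^2 * ((19/25)-r)^4 + (6851953125/47045881) * r^3 * ((19/25)-r)^3 + (4637901000/47045881) * r^4 * ((19/25)-r)^2 + (3537332925/94091762) * r^5 * ((19/25)-r)^1 + (556477371/94091762) * r^6 * ((19/25)-r)^0)"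
  unfolding cc_def tt_def mm_def YY_def by algebra

lemma pos_c: assumes "0 < r" "3 * r^4 < 1" shows "0 < cc r"
proof -
  have "0 < ((439453125/47045881) * r^0 * ((19/25)-r)^6 + (4716796875/94091762) * r^1 * ((19/25)-r)^5 + (5411718750/47045881) * r^2 * ((19/25)-r)^4 + (6851953125/47045881) * r^3 * ((19/25)-r)^3 + (4637901000/47045881) * r^4 * ((19/25)-r)^2 + (3537332925/94091762) * r^5 * ((19/25)-r)^1 + (556477371/94091762) * r^6 * ((19/25)-r)^0)" using assms r_bound[OF assms] by (intro add_pos_pos mult_pos_pos zero_less_power) auto
  moreover have "0 < 1-3 * r^4" using assms by simp
  ultimately show ?thesis unfolding id_c using assms by simp
qed

lemma id_sc: "3/4 * r^4-(cc r)^2 = r^4 * (1-3 * r^4)^1 * ((286102294921875/24524265031204) * r^0 * ((19/25)-r)^10 + (1430511474609375/12262132515602) * r^1 * ((19/25)-r)^9 + (12160711669921875/24524265031204) * r^2 * ((19/25)-r)^8 + (7381351318359375/6131066257801) * r^3 * ((19/25)-r)^7 + (22867558154296875/12262132515602) * r^4 * ((19/25)-r)^6 + (23710589560546875/12262132515602) * r^5 * ((19/25)-r)^5 + (34175041962609375/24524265031204) * r^6 * ((19/25)-r)^4 + (4249407285365625/6131066257801) * r^7 * ((19/25)-r)^3 + (5617713923956125/24524265031204) * r^8 * ((19/25)-r)^2 + (273981646903800/6131066257801) * r^9 * ((19/25)-r)^1 + (92015701785327/24524265031204) * r^10 * ((19/25)-r)^0)"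
  unfolding cc_def tt_def mm_def YY_def by algebra

lemma pos_sc: assumes "0 < r" "3 * r^4 < 1" shows "0 < 3/4 * r^4-(cc r)^2"
proof -
  have "0 < ((286102294921875/24524265031204) * r^0 * ((19/25)-r)^10 + (1430511474609375/12262132515602) * r^1 * ((19/25)-r)^9 + (12160711669921875/24524265031204) * r^2 * ((19/25)-r)^8 + (7381351318359375/6131066257801) * r^3 * ((19/25)-r)^7 + (22867558154296875/12262132515602) * r^4 * ((19/25)-r)^6 + (23710589560546875/12262132515602) * r^5 * ((19/25)-r)^5 + (34175041962609375/24524265031204) * r^6 * ((19/25)-r)^4 + (4249407285365625/6131066257801) * r^7 * ((19/25)-r)^3 + (5617713923956125/24524265031204) * r^8 * ((19/25)-r)^2 + (273981646903800/6131066257801) * r^9 * ((19/25)-r)^1 + (92015701785327/24524265031204) * r^10 * ((19/25)-r)^0)" using assms r_bound[OF assms] by (intro add_pos_pos mult_pos_pos zero_less_power) auto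
  moreover have "0 < 1-3 * r^4" using assms by simp
  ultimately show ?thesis unfolding id_sc using assms by simp
qed

lemma id_m1: "1-mm r = r^0 * (1-3 * r^4)^1 * ((390625/130321) * r^0 * ((19/25)-r)^4 + (1562500/130321) * r^1 * ((19/25)-r)^3 + (2343750/130321) * r^2 * ((19/25)-r)^2 + (5049675/521284) * r^3 * ((19/25)-r)^1 + (4735513/1563852) * r^4 * ((19/25)-r)^0)"
  unfolding cc_def tt_def mm_def YY_def by algebra

lemma pos_m1: assumes "0 < r" "3 * r^4 < 1" shows "0 < 1-mm r"
proof -
  have "0 < ((390625/130321) * r^0 * ((19/25)-r)^4 + (1562500/130321) * r^1 * ((19/25)-r)^3 + (2343750/130321) * r^2 * ((19/25)-r)^2 + (5049675/521284) * r^3 * ((19/25)-r)^1 + (4735513/1563852) * r^4 * ((19/25)-r)^0)" using assms r_bound[OF assms] by (intro add_pos_pos mult_pos_pos zero_less_power) auto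
  moreover have "0 < 1-3 * r^4" using assms by simp
  ultimately show ?thesis unfolding id_m1 using assms by simp
qed

lemma id_m: "mm r = r^3 * (1-3 * r^4)^0 * ((68359375/9904396) * r^0 * ((19/25)-r)^5 + (1084765625/29713188) * r^1 * ((19/25)-r)^4 + (1144140625/14856594) * r^2 * ((19/25)-r)^3 + (401171875/4952198) * r^3 * ((19/25)-r)^2 + (528817525/14856594) * r^4 * ((19/25)-r)^1 + (133594933/14856594) * r^5 * ((19/25)-r)^0)"
  unfolding cc_def tt_def mm_def YY_def by algebra

lemma pos_m: assumes "0 < r" "3 * r^4 < 1" shows "0 < mm r"
proof -
  have "0 < ((68359375/9904396) * r^0 * ((19/25)-r)^5 + (1084765625/29713188) * r^1 * ((19/25)-r)^4 + (1144140625/14856594) * r^2 * ((19/25)-r)^3 + (401171875/4952198) * r^3 * ((19/25)-r)^2 + (528817525/14856594) * r^4 * ((19/25)-r)^1 + (133594933/14856594) * r^5 * ((19/25)-r)^0)" using assms r_bound[OF assms] by (intro add_pos_pos mult_pos_pos zero_less_power) auto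
  moreover have "0 < 1-3 * r^4" using assms by simp
  ultimately show ?thesis unfolding id_m using assms by simp
qed

lemma id_Y: "YY r = r^2 * (1-3 * r^4)^0 * ((52734375/9904396) * r^0 * ((19/25)-r)^5 + (245859375/9904396) * r^1 * ((19/25)-r)^4 + (261890625/4952198) * r^2 * ((19/25)-r)^3 + (311765625/4952198) * r^3 * ((19/25)-r)^2 + (171352185/4952198) * r^4 * ((19/25)-r)^1 + (169143207/24760990) * r^5 * ((19/25)-r)^0)"
  unfolding cc_def tt_def mm_def YY_def by algebra

lemma pos_Y: assumes "0 < r" "3 * r^4 < 1" shows "0 < YY r"
proof -
  have "0 < ((52734375/9904396) * r^0 * ((19/25)-r)^5 + (245859375/9904396) * r^1 * ((19/25)-r)^4 + (261890625/4952198) * r^2 * ((19/25)-r)^3 + (311765625/4952198) * r^3 * ((19/25)-r)^2 + (171352185/4952198) * r^4 * ((19/25)-r)^1 + (169143207/24760990) * r^5 * ((19/25)-r)^0)" using assms r_bound[OF assms] by (intro add_pos_pos mult_pos_pos zero_less_power) auto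
  moreover have "0 < 1-3 * r^4" using assms by simp
  ultimately show ?thesis unfolding id_Y using assms by simp
qed

lemma W_bound:
  assumes "0 < v" "v < 1/2" "0 \<le> \<alpha>" "\<alpha> \<le> 1" "0 \<le> z" "z \<le> 1"
  shows "W v \<alpha> z \<le> max (Fm v \<alpha> (yP v \<alpha>)) (W v \<alpha> 1)"
proof -
  have s1: "sqrt (2 * v) \<le> 1" using assms by simp
  have W1: "W v \<alpha> 1 = Gf v \<alpha> 1" using W_high[OF assms(3) s1 assms(1)] .
  show ?thesis
  proof (cases "z \<le> sqrt (2 * v)")
    case True
    then have "W v \<alpha> z = Fm v \<alpha> z" using W_low assms by blast
    then show ?thesis using Fm_le_yP[OF assms(3) assms(1) assms(5)] by simp
  next
    case False
    then have zs: "sqrt (2 * v) \<le> z" by simp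
    have Wz: "W v \<alpha> z = Gf v \<alpha> z" using W_high[OF assms(3) zs assms(1)] .
    show ?thesis
    proof (cases "\<alpha> * z \<le> v")
      case True
      have "Gf v \<alpha> z \<le> Gf v \<alpha> (sqrt (2 * v))" using Gf_dec[OF order_refl zs True assms(3) assms(1)] .
      also have "\<dots> = Fm v \<alpha> (sqrt (2 * v))" using Gf_at assms by simp
      also have "\<dots> \<le> Fm v \<alpha> (yP v \<alpha>)" by (rule Fm_le_yP[OF assms(3) assms(1)]) (use assms in simp)
      finally show ?thesis using Wz by simp
    next
      case False
      have "Gf v \<alpha> z \<le> Gf v \<alpha> 1" using Gf_inc[OF zs assms(6) _ assms(3) assms(1)] False by simp
      then show ?thesis using Wz W1 by simp
    qed
  qed
qed

lemma plan_yP: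
  assumes "0 < v" "v < 1/2" "0 \<le> \<alpha>" "\<alpha> \<le> 1" "\<alpha> < sqrt (v/2)" "Dd v \<alpha> \<le> 0"
  shows "planner_solves v \<alpha> (yP v \<alpha>)"
proof -
  have yl: "yP v \<alpha> < sqrt (2 * v)" using yP_less_sqrt[OF assms(3) assms(1) assms(5)] .
  have y0: "0 \<le> yP v \<alpha>" using yP_facts[OF assms(3) assms(1)] by simp
  have s1: "sqrt (2 * v) \<le> 1" using assms by simp
  have Wy: "W v \<alpha> (yP v \<alpha>) = Fm v \<alpha> (yP v \<alpha>)" using W_low[OF assms(3) y0 _ assms(1)] yl by simp
  have W1: "W v \<alpha> 1 = Gf v \<alpha> 1" using W_high[OF assms(3) s1 assms(1)] .
  have "W v \<alpha> 1 \<le> Fm v \<alpha> (yP v \<alpha>)" using assms(6) W1 unfolding Dd_def by simp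
  then have m: "max (Fm v \<alpha> (yP v \<alpha>)) (W v \<alpha> 1) = W v \<alpha> (yP v \<alpha>)" using Wy by simp
  have y1: "yP v \<alpha> \<le> 1" using yl s1 by linarith
  show ?thesis unfolding planner_solves_def
    using W_bound[OF assms(1-4)] m y0 y1 by auto
qed

lemma plan_1_low:
  assumes "0 < v" "v < 1/2" "0 \<le> \<alpha>" "\<alpha> \<le> 1" "0 \<le> Dd v \<alpha>"
  shows "planner_solves v \<alpha> 1"
proof -
  have s1: "sqrt (2 * v) \<le> 1" using assms by simp
  have W1: "W v \<alpha> 1 = Gf v \<alpha> 1" using W_high[OF assms(3) s1 assms(1)] .
  have "Fm v \<alpha> (yP v \<alpha>) \<le> W v \<alpha> 1" using assms(5) W1 unfolding Dd_def by simp
  then have m: "max (Fm v \<alpha> (yP v \<alpha>)) (W v \<alpha> 1) = W v \<alpha> 1" by simp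
  show ?thesis unfolding planner_solves_def
    using W_bound[OF assms(1-4)] m by auto
qed

lemma plan_1_high:
  assumes "0 < v" "v < 1/2" "0 \<le> \<alpha>" "\<alpha> \<le> 1" "sqrt (v/2) \<le> \<alpha>"
  shows "planner_solves v \<alpha> 1"
proof -
  have s1: "sqrt (2 * v) \<le> 1" using assms by simp
  have W1: "W v \<alpha> 1 = Gf v \<alpha> 1" using W_high[OF assms(3) s1 assms(1)] .
  have sv: "sqrt (v/2) * sqrt (2 * v) = v" using assms by (simp add: real_sqrt_mult[symmetric])
  have "sqrt (v/2) * sqrt (2 * v) \<le> \<alpha> * sqrt (2 * v)" using assms by (intro mult_right_mono) auto
  then have av: "v \<le> \<alpha> * sqrt (2 * v)" using sv by simp
  have G: "Gf v \<alpha> (sqrt (2 * v)) \<le> Gf v \<alpha> 1" using Gf_inc[OF order_refl s1 av assms(3) assms(1)] .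
  have "W v \<alpha> z \<le> W v \<alpha> 1" if z: "0 \<le> z" "z \<le> 1" for z
  proof (cases "z \<le> sqrt (2 * v)")
    case True
    then have "W v \<alpha> z = Fm v \<alpha> z" using W_low assms z by blast
    also have "\<dots> \<le> Fm v \<alpha> (sqrt (2 * v))"
      using Fm_mono[OF assms(3) assms(1) z(1) True yP_ge_sqrt[OF assms(3) assms(1) assms(5)]] .
    also have "\<dots> = Gf v \<alpha> (sqrt (2 * v))" using Gf_at assms by simp
    finally show ?thesis using G W1 by simp
  next
    case False
    then have zs: "sqrt (2 * v) \<le> z" by simp
    have "\<alpha> * sqrt (2 * v) \<le> \<alpha> * z" using zs assms by (intro mult_left_mono) auto
    then have "v \<le> \<alpha> * z" using av by simp
    then have "Gf v \<alpha> z \<le> Gf v \<alpha> 1" using Gf_inc[OF zs z(2) _ assms(3) assms(1)] by simp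
    then show ?thesis using W_high[OF assms(3) zs assms(1)] W1 by simp
  qed
  then show ?thesis unfolding planner_solves_def by auto
qed

theorem proposition7:
  fixes v :: real
  assumes "0 < v" and "v < 1/2"
  shows "\<exists>\<alpha>P::real.
           (\<forall>\<alpha>\<in>{0..1}. \<alpha> < \<alpha>P \<longrightarrow> planner_solves v \<alpha> (yP v \<alpha>)) \<and>
           (\<forall>\<alpha>\<in>{0..1}. \<alpha> > \<alpha>P \<longrightarrow> planner_solves v \<alpha> 1) \<and>
           \<alpha>P < alphaS v \<and> alphaS v < alphaA v \<and>
           (\<forall>\<alpha>\<in>{0..1}. \<alpha> < \<alpha>P \<longrightarrow> yS v < yP v \<alpha> \<and> yP v \<alpha> < yA v)"
proof -
  have v0: "0 < v" and v1: "v < 1/2" using assms by auto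
  define w where "w = sqrt (2 * v/3)"
  define r where "r = sqrt w"
  have w0: "0 < w" unfolding w_def using v0 by simp
  have r0: "0 < r" unfolding r_def using w0 by simp
  have rw: "r^2 = w" unfolding r_def using w0 by simp
  have ww: "w^2 = 2 * v/3" unfolding w_def using v0 by simp
  have vr: "v = 3/2 * r^4"
  proof -
    have "r^4 = (r^2)^2" by simp
    then have "r^4 = 2 * v/3" using rw ww by simp
    then show ?thesis by simp
  qed
  have r1: "3 * r^4 < 1" using vr v1 by simp
  define s where "s = sqrt (v/2)"
  define T where "T = (2* v/3) powr (3/2)"
  have Tr: "T = r^6"
  proof -
    have "T = (2 * v/3) * sqrt (2 * v/3)" unfolding T_def using T_eq[OF v0] .
    also have "\<dots> = w^2 * w" unfolding w_def using v0 by simp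
    also have "\<dots> = r^6" using rw by (simp flip: rw add: power_mult[symmetric])
    finally show ?thesis .
  qed
  define c where "c = cc r"
  define t0 where "t0 = tt r"
  define m where "m = mm r"
  define Y where "Y = YY r"
  have c0: "0 < c" unfolding c_def using pos_c[OF r0 r1] by simp
  have cs2: "c^2 < v/2" unfolding c_def using pos_sc[OF r0 r1] vr by simp
  have cs: "c < s" unfolding s_def using cs2 by (rule real_less_rsqrt)
  have mu: "0 < 1 + 2 * c - 2 * t0" unfolding c_def t0_def using pos_mu[OF r0 r1] by simp
  have I1: "0 < 2 * (1 + 2 * c - 2 * t0) * (T - gg v c t0) - (gd v c t0)^2"
    unfolding c_def t0_def Tr gg_def gd_def vr using pos_I1[OF r0 r1] by simp
  have Pi_small: "PiS v \<alpha> < T" if "0 \<le> \<alpha>" "\<alpha> \<le> c" for \<alpha>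
    using PiS_lt[OF v0 v1 that mu I1] .
  have Dc: "0 < Dd v c"
  proof (rule Dd_pos[OF _ _ v0 v1])
    show "0 \<le> c" using c0 by simp
    show "c \<le> sqrt (v/2)" using cs unfolding s_def by simp
    show "m \<le> 1" unfolding m_def using pos_m1[OF r0 r1] by simp
    show "0 < Y" unfolding Y_def using pos_Y[OF r0 r1] by simp
    show "3 * c < 4 * Y" unfolding Y_def c_def using pos_Yc[OF r0 r1] by simp
    show "0 < 2 * (4 * Y - 3 * c) * ((m * (c + v) - (1 + c) * m^2/2 + m^3/6) - (c * Y^2/2 + v * Y - Y^3/3)) - 3 * (v + c * Y - Y^2)^2"
      unfolding Y_def c_def m_def vr using pos_I3[OF r0 r1] by simp
  qed
  define c1 where "c1 = c - min c (Dd v c) / 2"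
  have c1a: "0 \<le> c1" "c1 < c" unfolding c1_def using c0 Dc by auto
  have Dc1: "0 \<le> Dd v c1"
  proof -
    define e where "e = min c (Dd v c)"
    have e0: "0 < e" "e \<le> Dd v c" unfolding e_def using c0 Dc by auto
    have lip: "Dd v c - (c - c1)/2 \<le> Dd v c1" using Dd_lip[OF c1a(1) _ v0 v1] c1a by simp
    have "(c - c1)/2 = e/4" unfolding c1_def e_def by simp
    then have "Dd v c - e/4 \<le> Dd v c1" using lip by argo
    then show ?thesis using e0 by argo
  qed
  define P where "P = {\<alpha>. 0 \<le> \<alpha> \<and> \<alpha> \<le> s \<and> 0 \<le> Dd v \<alpha>}"
  define \<alpha>P where "\<alpha>P = Inf P"
  have c1P: "c1 \<in> P" unfolding P_def using c1a cs Dc1 by simp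
  have Pne: "P \<noteq> {}" using c1P by auto
  have Pbdd: "bdd_below P" unfolding P_def bdd_below_def by auto
  have aPc1: "\<alpha>P \<le> c1" unfolding \<alpha>P_def using c1P Pbdd by (rule cInf_lower)
  define S where "S = {\<alpha>. \<alpha> \<ge> 0 \<and> PiS v \<alpha> \<ge> (2* v/3) powr (3/2)}"
  have alphaS_eq: "alphaS v = Inf S" unfolding alphaS_def S_def ..
  define a0 where "a0 = 3/5 * sqrt (2 * v)"
  have a0S: "a0 \<in> S" unfolding S_def a0_def using PiS_big[OF v0 v1] v0 by simp
  have Sne: "S \<noteq> {}" using a0S by auto
  have Sbdd: "bdd_below S" unfolding S_def bdd_below_def by auto
  have cS: "c \<le> alphaS v"
    unfolding alphaS_eq
  proof (rule cInf_greatest[OF Sne])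
    fix x assume "x \<in> S"
    then have x: "0 \<le> x" "T \<le> PiS v x" unfolding S_def T_def by auto
    show "c \<le> x"
    proof (rule ccontr)
      assume "\<not> c \<le> x"
      then have "PiS v x < T" using Pi_small[OF x(1)] by simp
      then show False using x by simp
    qed
  qed
  have Sa0: "alphaS v \<le> a0" unfolding alphaS_eq using a0S Sbdd by (rule cInf_lower)
  have a0A: "a0 < alphaA v" unfolding a0_def alphaA_def using v0 by simp
  show ?thesis
  proof (intro exI[of _ \<alpha>P] conjI ballI impI)
    fix \<alpha> :: real assume a: "\<alpha> \<in> {0..1}" "\<alpha> < \<alpha>P"
    have "\<alpha> \<notin> P"
    proof
      assume "\<alpha> \<in> P"
      then have "\<alpha>P \<le> \<alpha>" unfolding \<alpha>P_def using Pbdd by (rule cInf_lower)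
      then show False using a by simp
    qed
    moreover have as: "\<alpha> < s" using a aPc1 c1a cs by simp
    ultimately have "Dd v \<alpha> < 0" using a unfolding P_def by auto
    then show "planner_solves v \<alpha> (yP v \<alpha>)"
      using plan_yP[OF v0 v1] a as unfolding s_def by auto
  next
    fix \<alpha> :: real assume a: "\<alpha> \<in> {0..1}" "\<alpha> > \<alpha>P"
    show "planner_solves v \<alpha> 1"
    proof (cases "s \<le> \<alpha>")
      case True
      then show ?thesis using plan_1_high[OF v0 v1] a unfolding s_def by auto
    next
      case False
      obtain x where x: "x \<in> P" "x < \<alpha>" using cInf_lessD[OF Pne] a unfolding \<alpha>P_def by auto
      then have "0 \<le> x" "0 \<le> Dd v x" unfolding P_def by auto
      moreover have "Dd v x \<le> Dd v \<alpha>" using Dd_mono[OF \<open>0 \<le> x\<close> _ _ v0 v1] x False unfolding s_def by auto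
      ultimately show ?thesis using plan_1_low[OF v0 v1] a by auto
    qed
  next
    show "\<alpha>P < alphaS v" using aPc1 c1a cS by simp
  next
    show "alphaS v < alphaA v" using Sa0 a0A by simp
  next
    fix \<alpha> :: real assume a: "\<alpha> \<in> {0..1}" "\<alpha> < \<alpha>P"
    have a0': "0 \<le> \<alpha>" using a by simp
    have ys0: "0 \<le> sqrt (2 * v/3)" using v0 by simp
    have e: "(sqrt (2 * v/3))^2 = 2 * v/3" using v0 by simp
    have "0 \<le> \<alpha> * sqrt (2 * v/3)" using a0' ys0 by simp
    then have "(sqrt (2 * v/3))^2 - \<alpha> * sqrt (2 * v/3) < v" using e v0 by linarith
    then have "\<not> yP v \<alpha> \<le> sqrt (2 * v/3)" using yP_le_iff[OF a0' v0 ys0] by simp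
    then show "yS v < yP v \<alpha>" unfolding yS_def by simp
  next
    fix \<alpha> :: real assume a: "\<alpha> \<in> {0..1}" "\<alpha> < \<alpha>P"
    have as: "\<alpha> < s" using a aPc1 c1a cs by simp
    have a0': "0 \<le> \<alpha>" using a by simp
    show "yP v \<alpha> < yA v" unfolding yA_def using yP_less_sqrt[OF a0' v0] as unfolding s_def by simp
  qed
qed

end
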